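(* Let $A=(i_1,\dots,i_a)$ be an ordered tuple of distinct elements of $I_d$, $\alpha\in\mathbb{Z}_2^{a,\mathrm{ev}}$, $r\ge0$, and put $\overrightarrow{A}=(i_a,i_1,\dots,i_{a-1})$, $\overrightarrow{\alpha}=(\alpha_a,\alpha_1,\dots,\alpha_{a-1})$. Then in $\mathcal{G}$, $$\overrightarrow{A}^{(r,\overrightarrow{\alpha})}=(-1)^{\alpha_a((a-1)(l-1)+r+1)}A^{(r,\alpha)}.$$
   Context: Fix a commutative ring $R$ and integers $l,d\ge1$; $I_a=\{1,\dots,a\}$. Let $\mathcal{G}$ be the $R$-superalgebra that is free as an $R$-module with basis $\{x_1^{m_1}\cdots x_d^{m_d}\,w\,c_1^{e_1}\cdots c_d^{e_d}: 0\le m_i\le l-1,\ w\in\Sigma_d,\ e_i\in\{0,1\}\}$, with multiplication determined by: the $x_i$ commute and $x_i^l=0$; $w\in\Sigma_d$ multiply as in the symmetric group (composition right to left); $c_i^2=1$, $c_ic_j=-c_jc_i$ for $i\ne j$; $wx_i=x_{w(i)}w$, $wc_i=c_{w(i)}w$; $x_ic_i=-c_ix_i$, $x_ic_j=c_jx_i$ for $i\ne j$. For an ordered tuple $A=(i_1,\dots,i_a)$ of distinct elements of $I_d$, $\sigma_A$ is the cycle $i_1\mapsto i_2\mapsto\dots\mapsto i_a\mapsto i_1$. For $\alpha\in\mathbb{Z}_2^a$: $|\alpha|=\sum_j\alpha_j$; $\mathbb{Z}_2^{a,\mathrm{ev}}$ is the set of $\alpha$ with $|\alpha|$ even; $c_\alpha(A)=c_{i_1}^{\alpha_1}\cdots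 c_{i_a}^{\alpha_a}$; $\epsilon^\alpha_j=\prod_{k<j}(-1)^{\alpha_k}$. For $r\ge0$, $\alpha\in\mathbb{Z}_2^{a,\mathrm{ev}}$: $h^\alpha_r(A)=\sum_{r_1+\dots+r_a=(a-1)(l-1)+r,\ r_j\ge0}\prod_j(\epsilon^\alpha_jx_{i_j})^{r_j}$ and $A^{(r,\alpha)}=h^\alpha_r(A)\sigma_Ac_\alpha(A)$. *)

theory Defs
  imports "HOL-Combinatorics.Cycles"
begin

text \<open>The superalgebra G (depending on l, d), over a commutative ring 'r, realised
 concretely as the free 'r-module on the basis monomials x^m w c^S, i.e. as functions
 from basis triples (m, w, S) to coefficients that vanish outside the valid basis.
 Here m : exponents of x_1..x_d (each < l), w : permutation of {1..d},
 S : the set of indices i with e_i = 1 (c^S = product of c_i, i in S, increasing order).\<close>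

type_synonym gbasis = "(nat \<Rightarrow> nat) \<times> (nat \<Rightarrow> nat) \<times> nat set"
type_synonym 'r gelem = "gbasis \<Rightarrow> 'r"

definition valid_basis :: "nat \<Rightarrow> nat \<Rightarrow> gbasis \<Rightarrow> bool" where
  "valid_basis l d b = (case b of (m, w, S) \<Rightarrow>
     (\<forall>i. (i \<in> {1..d} \<longrightarrow> m i < l) \<and> (i \<notin> {1..d} \<longrightarrow> m i = 0))
     \<and> w permutes {1..d} \<and> S \<subseteq> {1..d})"

definition Gbasis :: "nat \<Rightarrow> nat \<Rightarrow> gbasis set" where
  "Gbasis l d = {b. valid_basis l d b}"

text \<open>Right multiplication of a normal-form Clifford monomial (sign, c^T) by a generator c_j:
  c^T c_j = (-1)^{#{i in T. i > j}} c^{T sym-diff {j}}.\<close>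
definition cmul_gen :: "int \<times> nat set \<Rightarrow> nat \<Rightarrow> int \<times> nat set" where
  "cmul_gen st j = (case st of (s, T) \<Rightarrow>
     (s * (-1) ^ card {i \<in> T. i > j}, if j \<in> T then T - {j} else insert j T))"

definition cword :: "nat list \<Rightarrow> int \<times> nat set" where
  "cword js = foldl cmul_gen (1, {}) js"

text \<open>Product of basis monomials:
  x^m w c^S * x^m' w' c^S' = (-1)^{sum_{i in S} m'_i} x^{m + m' o w^-1} (w o w')
     * c_{w'^-1 s_1} ... c_{w'^-1 s_k} c^S'   (s_1 < ... < s_k the elements of S);
  it is zero if some exponent reaches l.\<close>
definition bmul :: "nat \<Rightarrow> nat \<Rightarrow> gbasis \<Rightarrow> gbasis \<Rightarrow> (int \<times> gbasis) option" where
  "bmul l d b1 b2 = (case b1 of (m, w, S) \<Rightarrow> case b2 of (m', w', S') \<Rightarrow>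
     (let s1 = (-1::int) ^ (\<Sum>i\<in>S. m' i);
          m'' = (\<lambda>j. m j + m' (inv w j));
          (s2, T) = cword (map (inv w') (sorted_list_of_set S) @ sorted_list_of_set S')
      in if (\<forall>j\<in>{1..d}. m'' j < l) then Some (s1 * s2, (m'', w \<circ> w', T)) else None))"

definition gmul :: "nat \<Rightarrow> nat \<Rightarrow> ('r::comm_ring_1) gelem \<Rightarrow> 'r gelem \<Rightarrow> 'r gelem" where
  "gmul l d f g = (\<lambda>b. \<Sum>b1\<in>Gbasis l d. \<Sum>b2\<in>Gbasis l d.
     (case bmul l d b1 b2 of None \<Rightarrow> 0
       | Some (s, b') \<Rightarrow> if b' = b then of_int s * f b1 * g b2 else 0))"

definition gsmul :: "'r::comm_ring_1 \<Rightarrow> 'r gelem \<Rightarrow> 'r gelem" where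
  "gsmul c f = (\<lambda>b. c * f b)"

definition gmono :: "nat \<Rightarrow> nat \<Rightarrow> gbasis \<Rightarrow> ('r::comm_ring_1) gelem" where
  "gmono l d b = (\<lambda>b'. if b' = b \<and> valid_basis l d b then 1 else 0)"

definition gone :: "nat \<Rightarrow> nat \<Rightarrow> ('r::comm_ring_1) gelem" where
  "gone l d = gmono l d (\<lambda>_. 0, id, {})"

definition gx :: "nat \<Rightarrow> nat \<Rightarrow> nat \<Rightarrow> ('r::comm_ring_1) gelem" where
  "gx l d i = gmono l d (\<lambda>j. if j = i then 1 else 0, id, {})"

definition gperm :: "nat \<Rightarrow> nat \<Rightarrow> (nat \<Rightarrow> nat) \<Rightarrow> ('r::comm_ring_1) gelem" where
  "gperm l d w = gmono l d (\<lambda>_. 0, w, {})"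

definition gc :: "nat \<Rightarrow> nat \<Rightarrow> nat \<Rightarrow> ('r::comm_ring_1) gelem" where
  "gc l d i = gmono l d (\<lambda>_. 0, id, {i})"

definition gpow :: "nat \<Rightarrow> nat \<Rightarrow> ('r::comm_ring_1) gelem \<Rightarrow> nat \<Rightarrow> 'r gelem" where
  "gpow l d f n = (gmul l d f ^^ n) (gone l d)"

definition gprod_list :: "nat \<Rightarrow> nat \<Rightarrow> ('r::comm_ring_1) gelem list \<Rightarrow> 'r gelem" where
  "gprod_list l d fs = foldr (gmul l d) fs (gone l d)"

definition gsum :: "'i set \<Rightarrow> ('i \<Rightarrow> ('r::comm_ring_1) gelem) \<Rightarrow> 'r gelem" where
  "gsum X F = (\<lambda>b. \<Sum>x\<in>X. F x b)"

text \<open>Tuples A are lists of distinct indices; alpha in Z_2^a is a bool list.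
 eps alpha j (0-based j) = prod_{k<j} (-1)^{alpha_k}.\<close>
definition eps :: "bool list \<Rightarrow> nat \<Rightarrow> 'r::comm_ring_1" where
  "eps \<alpha> j = (-1) ^ length (filter id (take j \<alpha>))"

definition hA :: "nat \<Rightarrow> nat \<Rightarrow> nat \<Rightarrow> nat list \<Rightarrow> bool list \<Rightarrow> ('r::comm_ring_1) gelem" where
  "hA l d r A \<alpha> = gsum {rs. length rs = length A \<and> sum_list rs = (length A - 1) * (l - 1) + r}
     (\<lambda>rs. gprod_list l d
        (map (\<lambda>j. gpow l d (gsmul (eps \<alpha> j) (gx l d (A ! j))) (rs ! j)) [0..<length A]))"

definition c_alpha :: "nat \<Rightarrow> nat \<Rightarrow> nat list \<Rightarrow> bool list \<Rightarrow> ('r::comm_ring_1) gelem" where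
  "c_alpha l d A \<alpha> = gprod_list l d
     (map (\<lambda>j. if \<alpha> ! j then gc l d (A ! j) else gone l d) [0..<length A])"

text \<open>sigma_A = cycle i_1 -> i_2 -> ... -> i_a -> i_1 (cycle_of_list).\<close>
definition Apow :: "nat \<Rightarrow> nat \<Rightarrow> nat \<Rightarrow> nat list \<Rightarrow> bool list \<Rightarrow> ('r::comm_ring_1) gelem" where
  "Apow l d r A \<alpha> = gmul l d (gmul l d (hA l d r A \<alpha>) (gperm l d (cycle_of_list A))) (c_alpha l d A \<alpha>)"

end

theory Submission
  imports Defs
begin

lemma finite_Gbasis: "finite (Gbasis l d)"
proof -
  have "Gbasis l d \<subseteq> {m. \<forall>x. (x \<in> {1..d} \<longrightarrow> m x \<in> {..<l}) \<and> (x \<notin> {1..d} \<longrightarrow> m x = 0)}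
      \<times> {w. w permutes {1..d}} \<times> Pow {1..d}"
    by (auto simp: Gbasis_def valid_basis_def)
  moreover have "finite ({m. \<forall>x. (x \<in> {1..d} \<longrightarrow> m x \<in> {..<l}) \<and> (x \<notin> {1..d} \<longrightarrow> m x = (0::nat))}
      \<times> {w. w permutes {1..d}} \<times> Pow {1..d})"
    by (intro finite_cartesian_product finite_set_of_finite_funs finite_permutations) auto
  ultimately show ?thesis by (rule finite_subset)
qed

lemma gmul_gsmul_left: "gmul l d (gsmul c f) g = gsmul c (gmul l d f g)"
  unfolding gmul_def gsmul_def
  by (rule ext) (simp add: sum_distrib_left, intro sum.cong refl, auto simp: mult_ac split: option.split)

lemma gmul_gsmul_right: "gmul l d f (gsmul c g) = gsmul c (gmul l d f g)"
  unfolding gmul_def gsmul_def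
  by (rule ext) (simp add: sum_distrib_left, intro sum.cong refl, auto simp: mult_ac split: option.split)

lemma gsmul_gsmul: "gsmul a (gsmul b f) = gsmul (a*b) f"
  by (simp add: gsmul_def mult_ac)

lemma gsmul_one: "gsmul 1 f = f"
  by (simp add: gsmul_def)

lemma gmul_zero_left: "gmul l d (\<lambda>_. 0) g = (\<lambda>_. 0)"
  unfolding gmul_def by (rule ext) (rule sum.neutral, auto intro!: sum.neutral split: option.split)

lemma gmono_invalid: "\<not> valid_basis l d b \<Longrightarrow> gmono l d b = (\<lambda>_. 0)"
  by (auto simp: gmono_def)

lemma gmul_gmono:
  assumes "valid_basis l d b1" "valid_basis l d b2"
  shows "(gmul l d (gmono l d b1) (gmono l d b2) :: 'r::comm_ring_1 gelem) =
    (\<lambda>b. case bmul l d b1 b2 of None \<Rightarrow> 0 | Some (s, b') \<Rightarrow> if b' = b then of_int s else 0)"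
proof (rule ext)
  fix b
  define C where "C = (case bmul l d b1 b2 of None \<Rightarrow> 0 | Some (s, b') \<Rightarrow> if b' = b then (of_int s::'r) else 0)"
  have 1: "\<And>x y. (case bmul l d x y of None \<Rightarrow> 0 | Some (s, b') \<Rightarrow> if b' = b then of_int s * gmono l d b1 x * (gmono l d b2 y::'r) else 0)
     = (if x = b1 then (if y = b2 then C else 0) else 0)"
    by (auto simp: gmono_def assms C_def split: option.split)
  have 2: "\<And>x. (\<Sum>y\<in>Gbasis l d. if x = b1 then (if y = b2 then C else 0) else 0) = (if x = b1 then C else 0)"
    using finite_Gbasis[of l d] assms(2) by (simp add: Gbasis_def)
  have "gmul l d (gmono l d b1) (gmono l d b2) b = (\<Sum>x\<in>Gbasis l d. if x = b1 then C else 0)"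
    unfolding gmul_def 1 2 ..
  also have "\<dots> = C" using finite_Gbasis[of l d] assms(1) by (simp add: Gbasis_def)
  finally show "(gmul l d (gmono l d b1) (gmono l d b2) b :: 'r) = (case bmul l d b1 b2 of None \<Rightarrow> 0 | Some (s, b') \<Rightarrow> if b' = b then of_int s else 0)"
    unfolding C_def .
qed

lemma gmul_zero_right: "gmul l d f (\<lambda>_. 0) = (\<lambda>_. 0)"
  unfolding gmul_def by (rule ext) (rule sum.neutral, auto intro!: sum.neutral split: option.split)

lemma cword_nil: "cword [] = (1, {})"
  by (simp add: cword_def)

lemma valid_x: "(\<forall>i. i \<notin> {1..d} \<longrightarrow> m i = 0) \<Longrightarrow> valid_basis l d (m, id, {}) = (\<forall>i\<in>{1..d}. m i < l)"
  by (auto simp: valid_basis_def permutes_id)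

lemma gmul_xmono:
  assumes "\<forall>i. i \<notin> {1..d} \<longrightarrow> m i = 0" "\<forall>i. i \<notin> {1..d} \<longrightarrow> m' i = 0"
  shows "(gmul l d (gmono l d (m, id, {})) (gmono l d (m', id, {})) :: 'r::comm_ring_1 gelem)
     = gmono l d (\<lambda>j. m j + m' j, id, {})"
proof -
  have s: "\<forall>i. i \<notin> {1..d} \<longrightarrow> m i + m' i = 0" using assms by auto
  show ?thesis
  proof (cases "valid_basis l d (m, id, {}) \<and> valid_basis l d (m', id, {})")
    case True
    have bm: "bmul l d (m, id, {}) (m', id, {}) = (if (\<forall>j\<in>{1..d}. m j + m' j < l) then Some (1, (\<lambda>j. m j + m' j, id, {})) else None)"
      by (simp add: bmul_def cword_nil inv_id)
    from True have v1: "valid_basis l d (m, id, {})" and v2: "valid_basis l d (m', id, {})" by auto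
    show ?thesis 
      unfolding gmul_gmono[OF v1 v2] bm
      apply (cases "\<forall>j\<in>{1..d}. m j + m' j < l")
       apply (auto simp: gmono_def valid_x[OF s] intro!: ext)[1]
      apply (subst gmono_invalid)
      using valid_x[OF s] by auto
  next
    case False
    then have "\<not> valid_basis l d (\<lambda>j. m j + m' j, id, {})"
      using valid_x[OF s] valid_x[OF assms(1)] valid_x[OF assms(2)] by force
    with False show ?thesis
      by (auto simp: gmono_invalid gmul_zero_left gmul_zero_right)
  qed
qed

lemma gpow_x:
  assumes "i \<in> {1..d}"
  shows "(gpow l d (gsmul e (gx l d i)) n :: 'r::comm_ring_1 gelem) = gsmul (e^n) (gmono l d (\<lambda>j. if j = i then n else 0, id, {}))"
proof (induction n)
  case 0
  then show ?case by (simp add: gpow_def gone_def gsmul_one id_def)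
next
  case (Suc n)
  have "gpow l d (gsmul e (gx l d i)) (Suc n) = gmul l d (gsmul e (gx l d i)) (gpow l d (gsmul e (gx l d i)) n)"
    by (simp add: gpow_def)
  also have "\<dots> = gsmul (e * e^n) (gmul l d (gmono l d (\<lambda>j. if j = i then 1 else 0, id, {})) (gmono l d (\<lambda>j. if j = i then n else 0, id, {})))"
    unfolding Suc.IH by (simp only: gx_def gmul_gsmul_left gmul_gsmul_right gsmul_gsmul, simp add: mult.commute)
  also have "\<dots> = gsmul (e^Suc n) (gmono l d (\<lambda>j. if j = i then Suc n else 0, id, {}))"
    by (subst gmul_xmono) (use assms in \<open>auto intro!: arg_cong[where f="\<lambda>m. gsmul _ (gmono l d (m, id, {}))"]\<close>)
  finally show ?case .
qed

lemma foldr_x: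
  assumes "\<forall>k\<in>set js. \<forall>i. i \<notin> {1..d} \<longrightarrow> M k i = 0" "\<forall>i. i \<notin> {1..d} \<longrightarrow> m0 i = 0"
  shows "foldr (gmul l d) (map (\<lambda>k. gsmul (c k) (gmono l d (M k, id, {}))) js) (gsmul c0 (gmono l d (m0, id, {})))
    = (gsmul (c0 * prod_list (map c js)) (gmono l d (\<lambda>i. m0 i + sum_list (map (\<lambda>k. M k i) js), id, {})) :: 'r::comm_ring_1 gelem)"
  using assms(1)
proof (induction js)
  case Nil
  then show ?case by simp
next
  case (Cons k js)
  have s: "\<forall>i. i \<notin> {1..d} \<longrightarrow> m0 i + sum_list (map (\<lambda>k. M k i) js) = 0"
    using Cons.prems assms(2) by (auto simp: sum_list_eq_0_iff)
  have "foldr (gmul l d) (map (\<lambda>k. gsmul (c k) (gmono l d (M k, id, {}))) (k # js)) (gsmul c0 (gmono l d (m0, id, {})))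
    = gmul l d (gsmul (c k) (gmono l d (M k, id, {}))) (gsmul (c0 * prod_list (map c js)) (gmono l d (\<lambda>i. m0 i + sum_list (map (\<lambda>k. M k i) js), id, {})))"
    using Cons by (simp add: id_def)
  also have "\<dots> = gsmul (c k * (c0 * prod_list (map c js))) (gmono l d (\<lambda>i. M k i + (m0 i + sum_list (map (\<lambda>k. M k i) js)), id, {}))"
    unfolding gmul_gsmul_left gmul_gsmul_right gsmul_gsmul
    by (subst gmul_xmono) (use Cons.prems s in \<open>auto simp: ac_simps\<close>)
  also have "\<dots> = gsmul (c0 * prod_list (map c (k # js))) (gmono l d (\<lambda>i. m0 i + sum_list (map (\<lambda>k. M k i) (k # js)), id, {}))"
    by (simp add: ac_simps)
  finally show ?case .
qed

lemma term_closed: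
  assumes "set A \<subseteq> {1..d}"
  shows "(gprod_list l d (map (\<lambda>j. gpow l d (gsmul (eps \<alpha> j) (gx l d (A!j))) (rs!j)) [0..<length A]) :: 'r::comm_ring_1 gelem)
    = gsmul (\<Prod>j<length A. eps \<alpha> j ^ (rs!j)) (gmono l d (\<lambda>i. \<Sum>j<length A. if i = A!j then rs!j else 0, id, {}))"
proof -
  have m: "map (\<lambda>j. gpow l d (gsmul (eps \<alpha> j) (gx l d (A!j))) (rs!j)) [0..<length A]
     = map (\<lambda>j. gsmul (eps \<alpha> j ^ (rs!j)) (gmono l d (\<lambda>i. if i = A!j then rs!j else 0, id, {}))) [0..<length A]"
    using assms by (intro map_cong refl gpow_x) (auto dest!: nth_mem)
  have g: "(gone l d :: 'r gelem) = gsmul 1 (gmono l d (\<lambda>_. 0, id, {}))"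
    by (simp add: gone_def gsmul_one)
  have "(gprod_list l d (map (\<lambda>j. gpow l d (gsmul (eps \<alpha> j) (gx l d (A!j))) (rs!j)) [0..<length A]) :: 'r gelem)
    = gsmul (1 * prod_list (map (\<lambda>j. eps \<alpha> j ^ (rs!j)) [0..<length A])) (gmono l d (\<lambda>i. 0 + sum_list (map (\<lambda>j. if i = A!j then rs!j else 0) [0..<length A]), id, {}))"
    unfolding gprod_list_def m g
    by (rule foldr_x) (use assms in \<open>auto dest!: nth_mem\<close>)
  also have "\<dots> = gsmul (\<Prod>j<length A. eps \<alpha> j ^ (rs!j)) (gmono l d (\<lambda>i. \<Sum>j<length A. if i = A!j then rs!j else 0, id, {}))"
    by (simp add: prod.distinct_set_conv_list[symmetric] interv_sum_list_conv_sum_set_nat lessThan_atLeast0)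
  finally show ?thesis .
qed

lemma gsum_reindex: "bij_betw h X Y \<Longrightarrow> gsum X (\<lambda>x. F (h x)) = gsum Y F"
  unfolding gsum_def by (rule ext) (rule sum.reindex_bij_betw)

lemma gsum_cong: "(\<And>x. x \<in> X \<Longrightarrow> F x = G x) \<Longrightarrow> gsum X F = gsum X G"
  unfolding gsum_def by (rule ext) (rule sum.cong, auto)

lemma gsum_smul: "gsum X (\<lambda>x. gsmul c (F x)) = gsmul c (gsum X F)"
  unfolding gsum_def gsmul_def by (rule ext) (simp add: sum_distrib_left)

lemma rot_bij: fixes n N :: nat shows "bij_betw (\<lambda>rs. last rs # butlast rs) {rs. length rs = Suc n \<and> sum_list rs = N} {rs. length rs = Suc n \<and> sum_list rs = N}"
proof (rule bij_betw_byWitness[where f'="\<lambda>rs. tl rs @ [hd rs]"])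
  have sl0: "\<And>rs::nat list. rs \<noteq> [] \<Longrightarrow> sum_list (last rs # butlast rs) = sum_list rs"
    by (metis append_butlast_last_id add.commute sum_list.Cons sum_list_append sum_list.Nil add_0_right)
  have sl: "\<And>rs::nat list. length rs = Suc n \<Longrightarrow> sum_list (last rs # butlast rs) = sum_list rs"
    using sl0 by (metis list.size(3) nat.simps(3))
  show "\<forall>a\<in>{rs. length rs = Suc n \<and> sum_list rs = N}. tl (last a # butlast a) @ [hd (last a # butlast a)] = a"
    by (auto intro: append_butlast_last_id)
  show "\<forall>a'\<in>{rs. length rs = Suc n \<and> sum_list rs = N}. last (tl a' @ [hd a']) # butlast (tl a' @ [hd a']) = a'"
    by (auto intro!: list.collapse)
  show "(\<lambda>rs. last rs # butlast rs) ` {rs. length rs = Suc n \<and> sum_list rs = N} \<subseteq> {rs. length rs = Suc n \<and> sum_list rs = N}"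
    by (auto simp del: sum_list.Cons intro!: sl)
  show "(\<lambda>rs. tl rs @ [hd rs]) ` {rs. length rs = Suc n \<and> sum_list rs = N} \<subseteq> {rs. length rs = Suc n \<and> sum_list rs = N}"
    by (clarsimp, metis list.collapse list.size(3) nat.simps(3) sum_list.Cons add.commute)
qed

lemma eps_Cons0: "(eps (b # \<alpha>) 0 :: 'r::comm_ring_1) = 1"
  by (simp add: eps_def)

lemma eps_Cons_Suc: "(eps (b # \<alpha>) (Suc j) :: 'r::comm_ring_1) = (-1) ^ of_bool b * eps \<alpha> j"
  by (simp add: eps_def power_add)

lemma eps_snoc: "j \<le> length \<alpha> \<Longrightarrow> (eps (\<alpha> @ [b]) j :: 'r::comm_ring_1) = eps \<alpha> j"
  by (simp add: eps_def)

lemma hA_rot: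
  assumes "set (A' @ [y]) \<subseteq> {1..d}" "length \<alpha>' = length A'" "even (length (filter id (\<alpha>' @ [b])))"
  shows "(hA l d r (y # A') (b # \<alpha>') :: 'r::comm_ring_1 gelem)
    = gsmul ((-1) ^ (of_bool b * (length A' * (l - 1) + r))) (hA l d r (A' @ [y]) (\<alpha>' @ [b]))"
proof -
  define n where "n = length A'"
  define N where "N = n * (l - 1) + r"
  define X where "X = {rs::nat list. length rs = Suc n \<and> sum_list rs = N}"
  define x :: 'r where "x = (-1) ^ of_bool b"
  have xx: "x * x = 1" by (simp add: x_def)
  have ycA: "set (y # A') \<subseteq> {1..d}" using assms(1) by auto
  define T1 where "T1 = (\<lambda>rs. gsmul (\<Prod>j<Suc n. eps (b # \<alpha>') j ^ (rs!j)) (gmono l d (\<lambda>i. \<Sum>j<Suc n. if i = (y # A')!j then rs!j else 0, id, {})) :: 'r gelem)"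
  define T2 where "T2 = (\<lambda>rs. gsmul (\<Prod>j<Suc n. eps (\<alpha>' @ [b]) j ^ (rs!j)) (gmono l d (\<lambda>i. \<Sum>j<Suc n. if i = (A' @ [y])!j then rs!j else 0, id, {})) :: 'r gelem)"
  have hX1: "{rs. length rs = length (y # A') \<and> sum_list rs = (length (y # A') - 1) * (l - 1) + r} = X"
    by (simp add: X_def N_def n_def)
  have hX2: "{rs. length rs = length (A' @ [y]) \<and> sum_list rs = (length (A' @ [y]) - 1) * (l - 1) + r} = X"
    by (simp add: X_def N_def n_def)
  have h1: "(hA l d r (y # A') (b # \<alpha>') :: 'r gelem) = gsum X T1"
    unfolding hA_def hX1
    by (rule gsum_cong) (subst term_closed[OF ycA], simp add: T1_def n_def)
  have h2: "(hA l d r (A' @ [y]) (\<alpha>' @ [b]) :: 'r gelem) = gsum X T2"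
    unfolding hA_def hX2
    by (rule gsum_cong) (subst term_closed[OF assms(1)], simp add: T2_def n_def)
  have key: "T1 (last rs # butlast rs) = gsmul (x ^ N) (T2 rs)" if "rs \<in> X" for rs
  proof -
    from that have "rs \<noteq> []" by (auto simp: X_def)
    then obtain rs' k where rs: "rs = rs' @ [k]" by (metis append_butlast_last_id)
    from that rs have lrs: "length rs' = n" and sN: "sum_list rs' + k = N" by (auto simp: X_def)
    have rot: "last rs # butlast rs = k # rs'" using rs by simp
    have c1: "(\<Prod>j<Suc n. eps (b # \<alpha>') j ^ ((k # rs')!j)) = x ^ (\<Sum>j<n. rs'!j) * (\<Prod>j<n. (eps \<alpha>' j :: 'r) ^ (rs'!j))"
      by (subst prod.lessThan_Suc_shift) (simp add: eps_Cons0 eps_Cons_Suc x_def power_mult_distrib prod.distrib power_sum)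
    have ea: "(eps \<alpha>' n :: 'r) = x"
    proof -
      have "(eps \<alpha>' n :: 'r) = (-1) ^ length (filter id \<alpha>')" using assms(2) by (simp add: eps_def n_def)
      also have "\<dots> = x" using assms(3) by (cases b) (auto simp: x_def)
      finally show ?thesis .
    qed
    have c2: "(\<Prod>j<Suc n. eps (\<alpha>' @ [b]) j ^ ((rs' @ [k])!j)) = (\<Prod>j<n. (eps \<alpha>' j :: 'r) ^ (rs'!j)) * x ^ k"
      using lrs assms(2) by (simp add: prod.lessThan_Suc eps_snoc nth_append ea[unfolded n_def] n_def)
    have sr: "(\<Sum>j<n. rs'!j) = sum_list rs'"
      using lrs by (simp add: sum_list_sum_nth atLeast0LessThan)
    have m1: "(\<lambda>i. \<Sum>j<Suc n. if i = (y # A')!j then (k # rs')!j else 0) = (\<lambda>i. \<Sum>j<Suc n. if i = (A' @ [y])!j then (rs' @ [k])!j else 0)"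
      using lrs by (subst sum.lessThan_Suc_shift) (auto simp: nth_append n_def add.commute intro!: ext sum.cong)
    have "x ^ sum_list rs' = x ^ N * x ^ k"
    proof -
      have "x ^ N * x ^ k = x ^ sum_list rs' * (x * x) ^ k"
        by (simp add: sN[symmetric] power_add power_mult_distrib ac_simps)
      then show ?thesis by (simp add: xx)
    qed
    then show ?thesis
      apply (simp only: T1_def T2_def rot)
      apply (simp only: rs gsmul_gsmul c1 c2 m1 sr)
      by (simp add: ac_simps)
  qed
  have "gsum X T1 = gsum X (\<lambda>rs. T1 (last rs # butlast rs))"
    unfolding X_def by (rule gsum_reindex[symmetric]) (rule rot_bij)
  also have "\<dots> = gsum X (\<lambda>rs. gsmul (x ^ N) (T2 rs))"
    by (rule gsum_cong) (rule key)
  also have "\<dots> = gsmul (x ^ N) (gsum X T2)" by (rule gsum_smul)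
  finally show ?thesis
    unfolding h1 h2 by (simp add: x_def N_def n_def power_mult)
qed

lemma cword_fold:
  "sorted xs \<Longrightarrow> distinct xs \<Longrightarrow> set xs \<inter> U = {} \<Longrightarrow>
   foldl cmul_gen (s, U) xs = (s * (-1) ^ sum_list (map (\<lambda>t. card {u\<in>U. u > t}) xs), U \<union> set xs)"
proof (induction xs arbitrary: s U)
  case Nil
  then show ?case by simp
next
  case (Cons x xs)
  have c: "cmul_gen (s, U) x = (s * (-1) ^ card {i \<in> U. i > x}, insert x U)"
    using Cons.prems by (simp add: cmul_gen_def)
  have e: "map (\<lambda>t. card {u \<in> insert x U. u > t}) xs = map (\<lambda>t. card {u\<in>U. u > t}) xs"
  proof (rule map_cong[OF refl])
    fix t assume "t \<in> set xs"
    with Cons.prems have "x < t" by (auto simp: order.strict_iff_order)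
    then have "{u \<in> insert x U. u > t} = {u\<in>U. u > t}" by auto
    then show "card {u \<in> insert x U. u > t} = card {u\<in>U. u > t}" by simp
  qed
  have "foldl cmul_gen (s, U) (x # xs) = foldl cmul_gen (s * (-1) ^ card {i \<in> U. i > x}, insert x U) xs"
    using c by simp
  also have "\<dots> = (s * (-1) ^ card {i \<in> U. i > x} * (-1) ^ sum_list (map (\<lambda>t. card {u\<in>insert x U. u > t}) xs), insert x U \<union> set xs)"
    using Cons.prems by (intro Cons.IH) auto
  also have "\<dots> = (s * (-1) ^ sum_list (map (\<lambda>t. card {u\<in>U. u > t}) (x # xs)), U \<union> set (x # xs))"
    unfolding e by (simp add: power_add ac_simps)
  finally show ?case .
qed

lemma cword_sorted: "finite T \<Longrightarrow> cword (sorted_list_of_set T) = (1, T)"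
  unfolding cword_def by (subst cword_fold) auto

lemma sum_card_lt:
  assumes "finite T"
  shows "sum_list (map (\<lambda>t. card {u\<in>{j}. u > t}) (sorted_list_of_set T)) = card {t\<in>T. t < (j::nat)}"
proof -
  have "sum_list (map (\<lambda>t. card {u\<in>{j}. u > t}) (sorted_list_of_set T)) = (\<Sum>t\<in>T. card {u\<in>{j}. u > t})"
    using assms by (simp add: sum_list_distinct_conv_sum_set)
  also have "\<dots> = (\<Sum>t\<in>T. if t < j then 1 else 0)"
  proof (intro sum.cong refl)
    fix t
    have "{u\<in>{j}. u > t} = (if t < j then {j} else {})" by auto
    then show "card {u\<in>{j}. u > t} = (if t < j then 1 else 0)" by simp
  qed
  also have "\<dots> = card {t\<in>T. t < j}"
    using assms by (simp add: sum.If_cases Int_def conj_commute)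
  finally show ?thesis .
qed

lemma valid_c: "l \<ge> 1 \<Longrightarrow> T \<subseteq> {1..d} \<Longrightarrow> valid_basis l d (\<lambda>_. 0, id, T)"
  by (auto simp: valid_basis_def permutes_id)

lemma gc_mul:
  assumes "l \<ge> 1" "j \<in> {1..d}" "T \<subseteq> {1..d}" "j \<notin> T"
  shows "(gmul l d (gc l d j) (gmono l d (\<lambda>_. 0, id, T)) :: 'r::comm_ring_1 gelem)
    = gsmul ((-1) ^ card {t\<in>T. t < j}) (gmono l d (\<lambda>_. 0, id, insert j T))"
proof -
  have fT: "finite T" using assms(3) finite_subset by blast
  have cw: "cword (j # sorted_list_of_set T) = ((-1) ^ card {t\<in>T. t < j}, insert j T)"
  proof -
    have c0: "cmul_gen (1, {}) j = (1, {j})" by (simp add: cmul_gen_def)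
    have "foldl cmul_gen (1, {j}) (sorted_list_of_set T) = (1 * (-1)^sum_list(map (\<lambda>t. card {u\<in>{j}. u>t}) (sorted_list_of_set T)), {j} \<union> set (sorted_list_of_set T))"
      by (rule cword_fold) (use assms fT in auto)
    then show ?thesis unfolding cword_def foldl_Cons c0 sum_card_lt[OF fT] using fT by simp
  qed
  have bm: "bmul l d (\<lambda>_. 0, id, {j}) (\<lambda>_. 0, id, T) = Some ((-1) ^ card {t\<in>T. t < j}, (\<lambda>_. 0, id, insert j T))"
    using assms(1) cw by (simp add: bmul_def inv_id)
  have v: "valid_basis l d (\<lambda>_. 0, id, {j})" using valid_c[OF assms(1)] assms(2) by auto
  show ?thesis
    unfolding gc_def gmul_gmono[OF v valid_c[OF assms(1,3)]] bm
    using valid_c[OF assms(1), of "insert j T"] assms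
    by (auto simp: gmono_def gsmul_def intro!: ext)
qed

lemma gone_mul:
  assumes "l \<ge> 1" "T \<subseteq> {1..d}"
  shows "(gmul l d (gone l d) (gmono l d (\<lambda>_. 0, id, T)) :: 'r::comm_ring_1 gelem) = gmono l d (\<lambda>_. 0, id, T)"
proof -
  have fT: "finite T" using assms(2) finite_subset by blast
  have bm: "bmul l d (\<lambda>_. 0, id, {}) (\<lambda>_. 0, id, T) = Some (1, (\<lambda>_. 0, id, T))"
    using assms(1) cword_sorted[OF fT] by (simp add: bmul_def inv_id)
  show ?thesis
    unfolding gone_def gmul_gmono[OF valid_c[OF assms(1) empty_subsetI] valid_c[OF assms]] bm
    using valid_c[OF assms]
    by (auto simp: gmono_def intro!: ext)
qed

definition sel :: "nat list \<Rightarrow> bool list \<Rightarrow> nat list" where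
  "sel A \<alpha> = map fst (filter snd (zip A \<alpha>))"

fun ninv :: "nat list \<Rightarrow> nat" where
  "ninv [] = 0"
| "ninv (x # xs) = length (filter (\<lambda>t. t < x) xs) + ninv xs"

lemma sel_Cons: "sel (a # A) (b # \<alpha>) = (if b then a # sel A \<alpha> else sel A \<alpha>)"
  by (simp add: sel_def)

lemma sel_snoc: "length A = length \<alpha> \<Longrightarrow> sel (A @ [a]) (\<alpha> @ [b]) = sel A \<alpha> @ (if b then [a] else [])"
  by (simp add: sel_def)

lemma sel_props: "length A = length \<alpha> \<Longrightarrow> set (sel A \<alpha>) \<subseteq> set A \<and> (distinct A \<longrightarrow> distinct (sel A \<alpha>)) \<and> length (sel A \<alpha>) = length (filter id \<alpha>)"
  by (induction A \<alpha> rule: list_induct2) (auto simp: sel_Cons sel_def)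

lemma c_alpha_Cons: "c_alpha l d (a # A) (b # \<alpha>) = gmul l d (if b then gc l d a else gone l d) (c_alpha l d A \<alpha>)"
  unfolding c_alpha_def gprod_list_def
  by (simp add: upt_conv_Cons map_Suc_upt[symmetric] o_def del: upt_Suc, intro conjI impI arg_cong2[where f="gmul l d"] refl arg_cong2[where f="foldr (gmul l d)"] map_cong, auto)

lemma c_alpha_closed:
  assumes "l \<ge> 1" "length A = length \<alpha>" "distinct A" "set A \<subseteq> {1..d}"
  shows "(c_alpha l d A \<alpha> :: 'r::comm_ring_1 gelem) = gsmul ((-1) ^ ninv (sel A \<alpha>)) (gmono l d (\<lambda>_. 0, id, set (sel A \<alpha>)))"
  using assms(2-4)
proof (induction A \<alpha> rule: list_induct2)
  case Nil
  then show ?case by (simp add: c_alpha_def gprod_list_def gone_def sel_def gsmul_one id_def)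
next
  case (Cons a A b \<alpha>)
  have IH: "(c_alpha l d A \<alpha> :: 'r gelem) = gsmul ((-1) ^ ninv (sel A \<alpha>)) (gmono l d (\<lambda>_. 0, id, set (sel A \<alpha>)))"
    using Cons by (simp add: id_def)
  have sp: "set (sel A \<alpha>) \<subseteq> set A" "distinct (sel A \<alpha>)" using sel_props[OF Cons.hyps] Cons.prems by auto
  have S: "set (sel A \<alpha>) \<subseteq> {1..d}" using sp Cons.prems by auto
  show ?case
  proof (cases b)
    case True
    have an: "a \<notin> set (sel A \<alpha>)" using sp Cons.prems by auto
    have cd: "card {t. t < a \<and> t \<in> set (sel A \<alpha>)} = length (filter (\<lambda>t. t < a) (sel A \<alpha>))"
      using sp(2) by (simp add: distinct_length_filter Int_def conj_commute)
    show ?thesis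
      unfolding c_alpha_Cons IH gmul_gsmul_right using True
      apply (simp add: sel_Cons)
      apply (subst gc_mul[OF assms(1) _ S an])
      using Cons.prems apply simp
      by (simp add: gsmul_gsmul cd power_add ac_simps id_def)
  next
    case False
    show ?thesis
      unfolding c_alpha_Cons IH gmul_gsmul_right using False gone_mul[OF assms(1) S, where 'r='r]
      by (simp add: sel_Cons id_def)
  qed
qed

lemma ninv_snoc: "ninv (xs @ [y]) = ninv xs + length (filter (\<lambda>t. t > y) xs)"
  by (induction xs) auto

lemma neg1_parity: "even (m + n) \<Longrightarrow> ((-1::'r::comm_ring_1) ^ m) = (-1) ^ n"
  by (metis (no_types, lifting) even_add neg_one_even_power neg_one_odd_power)

lemma ninv_rot:
  assumes "y \<notin> set xs"
  shows "((-1::'r::comm_ring_1) ^ ninv (y # xs)) = (-1) ^ (length xs + ninv (xs @ [y]))"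
proof (rule neg1_parity)
  have f: "filter (\<lambda>t. t > y) xs = filter (\<lambda>t. \<not> t < y) xs"
    using assms by (intro filter_cong refl) (auto, metis linorder_neqE_nat)
  have "length (filter (\<lambda>t. t < y) xs) + length (filter (\<lambda>t. t > y) xs) = length xs"
    unfolding f by (rule sum_length_filter_compl)
  moreover have "ninv (xs @ [y]) = ninv xs + length (filter (\<lambda>t. t > y) xs)" by (rule ninv_snoc)
  moreover have "ninv (y # xs) = length (filter (\<lambda>t. t < y) xs) + ninv xs" by simp
  ultimately have e: "ninv (y # xs) + (length xs + ninv (xs @ [y])) = 2 * (length xs + ninv xs)"
    by presburger
  show "even (ninv (y # xs) + (length xs + ninv (xs @ [y])))" unfolding e by simp
qed

lemma c_alpha_rot:
  assumes "l \<ge> 1" "distinct (A' @ [y])" "set (A' @ [y]) \<subseteq> {1..d}" "length \<alpha>' = length A'"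
    "even (length (filter id (\<alpha>' @ [b])))"
  shows "(c_alpha l d (y # A') (b # \<alpha>') :: 'r::comm_ring_1 gelem) = gsmul ((-1) ^ of_bool b) (c_alpha l d (A' @ [y]) (\<alpha>' @ [b]))"
proof -
  have h1: "(c_alpha l d (y # A') (b # \<alpha>') :: 'r gelem) = gsmul ((-1) ^ ninv (sel (y # A') (b # \<alpha>'))) (gmono l d (\<lambda>_. 0, id, set (sel (y # A') (b # \<alpha>'))))"
    using assms by (intro c_alpha_closed) auto
  have h2: "(c_alpha l d (A' @ [y]) (\<alpha>' @ [b]) :: 'r gelem) = gsmul ((-1) ^ ninv (sel (A' @ [y]) (\<alpha>' @ [b]))) (gmono l d (\<lambda>_. 0, id, set (sel (A' @ [y]) (\<alpha>' @ [b]))))"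
    using assms by (intro c_alpha_closed) auto
  have sp: "set (sel A' \<alpha>') \<subseteq> set A'" "length (sel A' \<alpha>') = length (filter id \<alpha>')"
    using sel_props[of A' \<alpha>'] assms(4) by auto
  show ?thesis
  proof (cases b)
    case True
    have yn: "y \<notin> set (sel A' \<alpha>')" using sp assms(2) by auto
    have odd: "odd (length (sel A' \<alpha>'))" using assms(5) True sp(2) by simp
    have "((-1::'r) ^ ninv (y # sel A' \<alpha>')) = (-1) * (-1) ^ ninv (sel A' \<alpha>' @ [y])"
      unfolding ninv_rot[OF yn] power_add using odd by simp
    then show ?thesis
      unfolding h1 h2 using True assms(4)
      by (simp add: sel_Cons sel_snoc gsmul_gsmul)
  next
    case False
    then show ?thesis unfolding h1 h2 using assms(4)
      by (simp add: sel_Cons sel_snoc gsmul_one)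
  qed
qed

theorem mainTheorem12:
  fixes l d r :: nat and A :: "nat list" and \<alpha> :: "bool list"
  assumes "l \<ge> 1" "d \<ge> 1"
    and "distinct A" "set A \<subseteq> {1..d}" "length A \<ge> 1"
    and "length \<alpha> = length A" "even (length (filter id \<alpha>))"
  shows "(Apow l d r (last A # butlast A) (last \<alpha> # butlast \<alpha>) :: 'r::comm_ring_1 gelem)
     = gsmul ((-1) ^ (of_bool (last \<alpha>) * ((length A - 1) * (l - 1) + r + 1))) (Apow l d r A \<alpha>)"
proof -
  define A' where "A' = butlast A"
  define y where "y = last A"
  define \<alpha>' where "\<alpha>' = butlast \<alpha>"
  define b where "b = last \<alpha>"
  have An: "A \<noteq> []" "\<alpha> \<noteq> []" using assms(5,6) by auto
  have eA: "A = A' @ [y]" and e\<alpha>: "\<alpha> = \<alpha>' @ [b]" using An by (simp_all add: A'_def y_def \<alpha>'_def b_def)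
  have len: "length \<alpha>' = length A'" using assms(6) by (simp add: A'_def \<alpha>'_def)
  have dA: "distinct (A' @ [y])" and sA: "set (A' @ [y]) \<subseteq> {1..d}" and ev: "even (length (filter id (\<alpha>' @ [b])))"
    using assms eA e\<alpha> by auto
  have cyc: "cycle_of_list (y # A') = cycle_of_list (A' @ [y])"
    using cycle_of_list_rotate_independent[of "y # A'" 1] dA by simp
  have "(Apow l d r (y # A') (b # \<alpha>') :: 'r gelem)
     = gsmul ((-1) ^ of_bool b * (-1) ^ (of_bool b * (length A' * (l - 1) + r))) (Apow l d r (A' @ [y]) (\<alpha>' @ [b]))"
    unfolding Apow_def hA_rot[OF sA len ev] c_alpha_rot[OF assms(1) dA sA len ev] cyc
    by (simp add: gmul_gsmul_left gmul_gsmul_right gsmul_gsmul)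
  also have "\<dots> = gsmul ((-1) ^ (of_bool b * (length A' * (l - 1) + r + 1))) (Apow l d r (A' @ [y]) (\<alpha>' @ [b]))"
    by (cases b) simp_all
  finally have calc: "(Apow l d r (y # A') (b # \<alpha>') :: 'r gelem) = gsmul ((-1) ^ (of_bool b * (length A' * (l - 1) + r + 1))) (Apow l d r (A' @ [y]) (\<alpha>' @ [b]))" .
  have hl: "length A - 1 = length A'" by (simp add: A'_def)
  show ?thesis using calc
    by (simp only: A'_def[symmetric] y_def[symmetric] \<alpha>'_def[symmetric] b_def[symmetric] hl eA[symmetric] e\<alpha>[symmetric])
qed

end
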